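(* Let $G$ be a finite abelian group, $k\ge1$, $\Gamma=G\wr\mathbb{Z}^k=\Sigma\rtimes_\alpha\mathbb{Z}^k$, and let $\varphi:\Gamma\to\Gamma$ be an automorphism. Let $\varphi'=\varphi|_\Sigma:\Sigma\to\Sigma$ and let $\overline{\varphi}:\mathbb{Z}^k\to\mathbb{Z}^k$ be the automorphism induced by $\varphi$ on $\Gamma/\Sigma\cong\mathbb{Z}^k$. Then $R(\varphi)<\infty$ if and only if $R(\overline{\varphi})<\infty$ and $R(\tau_m\circ\varphi')<\infty$ for every $m\in\mathbb{Z}^k$. Moreover, in the "if" direction it suffices to require $R(\tau_m\circ\varphi')<\infty$ only for $m$ running over a set of representatives of the Reidemeister classes of $\overline{\varphi}$ (together with $R(\overline{\varphi})<\infty$).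
   Context: Reidemeister number: for an endomorphism $\psi$ of a group $\Gamma$, $x,y$ are $\psi$-conjugate if $y=gx\psi(g^{-1})$ for some $g\in\Gamma$; $R(\psi)$ is the number of such classes (possibly $\infty$). $G\wr\mathbb{Z}^k=\Sigma\rtimes_\alpha\mathbb{Z}^k$ with $\Sigma=\bigoplus_{x\in\mathbb{Z}^k}G_x$, $G_x\cong G$, $g_x$ denoting $g\in G$ placed in $G_x$, and $\alpha(x)(g_y)=g_{x+y}$. $\Sigma$ is the set of torsion elements of $\Gamma$, hence invariant under every automorphism. For $m\in\mathbb{Z}^k\subset\Gamma$, $\tau_m:\Sigma\to\Sigma$ denotes conjugation $h\mapsto mhm^{-1}$ restricted to $\Sigma$, i.e. $\tau_m=\alpha(m)$. *)

theory Defs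
  imports "HOL-Algebra.Algebra" "HOL-Library.Extended_Nat" "HOL-Library.Function_Algebras"
begin

definition twisted_conj :: "('g, 'b) monoid_scheme \<Rightarrow> ('g \<Rightarrow> 'g) \<Rightarrow> ('g \<times> 'g) set" where
  "twisted_conj H \<psi> = {(x, y). x \<in> carrier H \<and> y \<in> carrier H \<and>
      (\<exists>g \<in> carrier H. y = g \<otimes>\<^bsub>H\<^esub> x \<otimes>\<^bsub>H\<^esub> \<psi> (inv\<^bsub>H\<^esub> g))}"

definition reidemeister_classes :: "('g, 'b) monoid_scheme \<Rightarrow> ('g \<Rightarrow> 'g) \<Rightarrow> 'g set set" where
  "reidemeister_classes H \<psi> = carrier H // twisted_conj H \<psi>"

definition reidemeister_number :: "('g, 'b) monoid_scheme \<Rightarrow> ('g \<Rightarrow> 'g) \<Rightarrow> enat" where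
  "reidemeister_number H \<psi> =
     (if finite (reidemeister_classes H \<psi>) then enat (card (reidemeister_classes H \<psi>)) else \<infinity>)"

definition zvec :: "nat \<Rightarrow> (nat \<Rightarrow> int) set" where
  "zvec k = {v. \<forall>i\<ge>k. v i = 0}"

definition zgrp :: "nat \<Rightarrow> (nat \<Rightarrow> int) monoid" where
  "zgrp k = \<lparr>carrier = zvec k, monoid.mult = (+), one = 0\<rparr>"

text \<open>Sigma = direct sum of copies of G indexed by Z^k: finitely supported functions
  Z^k -> G (canonically equal to the identity outside Z^k).\<close>

definition fsupp :: "('a, 'b) monoid_scheme \<Rightarrow> nat \<Rightarrow> ((nat \<Rightarrow> int) \<Rightarrow> 'a) set" where
  "fsupp G k = {s. (\<forall>x. s x \<in> carrier G) \<and> (\<forall>x. x \<notin> zvec k \<longrightarrow> s x = \<one>\<^bsub>G\<^esub>)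
                    \<and> finite {x. s x \<noteq> \<one>\<^bsub>G\<^esub>}}"

text \<open>alpha(m)(t)(x) = t(x - m), so alpha(m)(g_y) = g_(m+y).
  Multiplication of the semidirect product Sigma x|_alpha Z^k:
  (s,m)(t,n) = (s * alpha(m)(t), m + n).\<close>

definition wreath :: "('a, 'b) monoid_scheme \<Rightarrow> nat \<Rightarrow> (((nat \<Rightarrow> int) \<Rightarrow> 'a) \<times> (nat \<Rightarrow> int)) monoid" where
  "wreath G k = \<lparr>carrier = fsupp G k \<times> zvec k,
      monoid.mult = (\<lambda>(s, m) (t, n). (\<lambda>x. s x \<otimes>\<^bsub>G\<^esub> t (x - m), m + n)),
      one = (\<lambda>_. \<one>\<^bsub>G\<^esub>, 0)\<rparr>"

definition sigma_grp :: "('a, 'b) monoid_scheme \<Rightarrow> nat \<Rightarrow> (((nat \<Rightarrow> int) \<Rightarrow> 'a) \<times> (nat \<Rightarrow> int)) monoid" where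
  "sigma_grp G k = (wreath G k)\<lparr>carrier := {h \<in> carrier (wreath G k). snd h = 0}\<rparr>"

definition zelt :: "('a, 'b) monoid_scheme \<Rightarrow> (nat \<Rightarrow> int) \<Rightarrow> ((nat \<Rightarrow> int) \<Rightarrow> 'a) \<times> (nat \<Rightarrow> int)" where
  "zelt G m = (\<lambda>_. \<one>\<^bsub>G\<^esub>, m)"

definition tau :: "('a, 'b) monoid_scheme \<Rightarrow> nat \<Rightarrow> (nat \<Rightarrow> int)
    \<Rightarrow> ((nat \<Rightarrow> int) \<Rightarrow> 'a) \<times> (nat \<Rightarrow> int) \<Rightarrow> ((nat \<Rightarrow> int) \<Rightarrow> 'a) \<times> (nat \<Rightarrow> int)" where
  "tau G k m h = zelt G m \<otimes>\<^bsub>wreath G k\<^esub> h \<otimes>\<^bsub>wreath G k\<^esub> inv\<^bsub>wreath G k\<^esub> (zelt G m)"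

text \<open>The automorphism of Gamma/Sigma = Z^k induced by phi: the class of (s,m) is m.\<close>

definition induced_bar :: "('a, 'b) monoid_scheme
    \<Rightarrow> (((nat \<Rightarrow> int) \<Rightarrow> 'a) \<times> (nat \<Rightarrow> int) \<Rightarrow> ((nat \<Rightarrow> int) \<Rightarrow> 'a) \<times> (nat \<Rightarrow> int))
    \<Rightarrow> (nat \<Rightarrow> int) \<Rightarrow> (nat \<Rightarrow> int)" where
  "induced_bar G \<phi> m = snd (\<phi> (zelt G m))"

end

theory Submission
  imports Defs "Jordan_Normal_Form.Determinant"
begin


section \<open>Generic facts on twisted conjugacy\<close>

lemma (in group) tc_equiv:
  assumes hom: "\<psi> \<in> hom G G"
  shows "equiv (carrier G) (twisted_conj G \<psi>)"
proof -
  interpret group_hom G G \<psi> using hom by (simp add: group_hom_def group_hom_axioms_def is_group)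
  show ?thesis
  proof (rule equivI)
    show "twisted_conj G \<psi> \<subseteq> carrier G \<times> carrier G" by (auto simp: twisted_conj_def)
    show "refl_on (carrier G) (twisted_conj G \<psi>)"
    proof (rule refl_onI)
      fix x assume x: "x \<in> carrier G"
      have "x = \<one> \<otimes> x \<otimes> \<psi> (inv \<one>)" using x by simp
      then show "(x, x) \<in> twisted_conj G \<psi>" using x unfolding twisted_conj_def by blast
    qed
    show "sym (twisted_conj G \<psi>)"
    proof (rule symI)
      fix x y assume "(x, y) \<in> twisted_conj G \<psi>"
      then obtain g where x: "x \<in> carrier G" and y: "y \<in> carrier G" and g: "g \<in> carrier G"
        and e: "y = g \<otimes> x \<otimes> \<psi> (inv g)" unfolding twisted_conj_def by blast
      have "inv g \<otimes> y \<otimes> \<psi> (inv (inv g)) = inv g \<otimes> g \<otimes> x \<otimes> (\<psi> (inv g) \<otimes> \<psi> g)"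
        using x g by (simp add: e m_assoc) (simp add: m_assoc[symmetric])
      also have "\<psi> (inv g) \<otimes> \<psi> g = \<one>" using g by (simp flip: hom_mult)
      finally have "x = inv g \<otimes> y \<otimes> \<psi> (inv (inv g))" using x g by simp
      then show "(y, x) \<in> twisted_conj G \<psi>" using x y g unfolding twisted_conj_def by blast
    qed
    show "trans (twisted_conj G \<psi>)"
    proof (rule transI)
      fix x y z assume "(x, y) \<in> twisted_conj G \<psi>" "(y, z) \<in> twisted_conj G \<psi>"
      then obtain g h where x: "x \<in> carrier G" and y: "y \<in> carrier G" and z: "z \<in> carrier G"
        and g: "g \<in> carrier G" and h: "h \<in> carrier G"
        and e1: "y = g \<otimes> x \<otimes> \<psi> (inv g)" and e2: "z = h \<otimes> y \<otimes> \<psi> (inv h)"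
        unfolding twisted_conj_def by blast
      have "z = (h \<otimes> g) \<otimes> x \<otimes> (\<psi> (inv g) \<otimes> \<psi> (inv h))"
        using x g h by (simp add: e1 e2 m_assoc)
      also have "\<psi> (inv g) \<otimes> \<psi> (inv h) = \<psi> (inv (h \<otimes> g))"
        using g h by (simp add: inv_mult_group hom_mult)
      finally show "(x, z) \<in> twisted_conj G \<psi>" using x z g h unfolding twisted_conj_def by blast
    qed
  qed
qed

lemma finite_quotient_iff:
  assumes eq: "equiv A r"
  shows "finite (A // r) \<longleftrightarrow> (\<exists>F. F \<subseteq> A \<and> finite F \<and> A \<subseteq> r `` F)"
proof
  assume fin: "finite (A // r)"
  define F where "F = (\<lambda>C. (SOME x. x \<in> C)) ` (A // r)"
  have "F \<subseteq> A"
  proof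
    fix y assume "y \<in> F"
    then obtain C where C: "C \<in> A // r" and y: "y = (SOME x. x \<in> C)" unfolding F_def by blast
    from C obtain a where a: "a \<in> A" "C = r `` {a}" by (auto elim: quotientE)
    have "a \<in> C" using a eq by (metis equiv_class_self)
    then have "y \<in> C" using y by (metis someI)
    then show "y \<in> A" using C eq by (meson in_quotient_imp_subset subsetD)
  qed
  moreover have "A \<subseteq> r `` F"
  proof
    fix a assume a: "a \<in> A"
    define C where "C = r `` {a}"
    have C: "C \<in> A // r" using a by (simp add: C_def quotientI)
    have "a \<in> C" using a eq by (metis C_def equiv_class_self)
    then have c: "(SOME x. x \<in> C) \<in> C" by (metis someI)
    then have "(a, (SOME x. x \<in> C)) \<in> r" by (simp add: C_def)
    then have "((SOME x. x \<in> C), a) \<in> r" using eq by (meson equivE symD)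
    moreover have "(SOME x. x \<in> C) \<in> F" using C by (simp add: F_def)
    ultimately show "a \<in> r `` F" by blast
  qed
  ultimately show "\<exists>F. F \<subseteq> A \<and> finite F \<and> A \<subseteq> r `` F" using fin F_def by blast
next
  assume "\<exists>F. F \<subseteq> A \<and> finite F \<and> A \<subseteq> r `` F"
  then obtain F where F: "F \<subseteq> A" "finite F" "A \<subseteq> r `` F" by blast
  have "A // r \<subseteq> (\<lambda>f. r `` {f}) ` F"
  proof
    fix C assume "C \<in> A // r"
    then obtain a where a: "a \<in> A" "C = r `` {a}" by (auto elim: quotientE)
    then obtain f where f: "f \<in> F" "(f, a) \<in> r" using F by blast
    then have "r `` {f} = r `` {a}" using eq by (simp add: equiv_class_eq)
    then show "C \<in> (\<lambda>f. r `` {f}) ` F" using a f by blast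
  qed
  then show "finite (A // r)" using F by (meson finite_surj)
qed

lemma R_fin_iff:
  assumes "group H" "\<psi> \<in> hom H H"
  shows "reidemeister_number H \<psi> < \<infinity> \<longleftrightarrow>
     (\<exists>F. F \<subseteq> carrier H \<and> finite F \<and> carrier H \<subseteq> twisted_conj H \<psi> `` F)"
proof -
  have "reidemeister_number H \<psi> < \<infinity> \<longleftrightarrow> finite (reidemeister_classes H \<psi>)"
    by (simp add: reidemeister_number_def)
  then show ?thesis unfolding reidemeister_classes_def
    using finite_quotient_iff[OF group.tc_equiv[OF assms]] by simp
qed



lemma zvec_add[simp]: "m \<in> zvec k \<Longrightarrow> n \<in> zvec k \<Longrightarrow> m + n \<in> zvec k"
  by (simp add: zvec_def)
lemma zvec_diff[simp]: "m \<in> zvec k \<Longrightarrow> n \<in> zvec k \<Longrightarrow> m - n \<in> zvec k"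
  by (simp add: zvec_def)
lemma zvec_uminus[simp]: "m \<in> zvec k \<Longrightarrow> - m \<in> zvec k"
  by (simp add: zvec_def)
lemma zvec_zero[simp]: "0 \<in> zvec k"
  by (simp add: zvec_def)
lemma zvec_shift: "m \<in> zvec k \<Longrightarrow> x - m \<in> zvec k \<longleftrightarrow> x \<in> zvec k"
  by (simp add: zvec_def)
lemma zvec_shift': "m \<in> zvec k \<Longrightarrow> x + m \<in> zvec k \<longleftrightarrow> x \<in> zvec k"
  by (simp add: zvec_def)

lemma W_carrier: "(s, m) \<in> carrier (wreath G k) \<longleftrightarrow> s \<in> fsupp G k \<and> m \<in> zvec k"
  by (simp add: wreath_def)
lemma W_carrier': "x \<in> carrier (wreath G k) \<longleftrightarrow> fst x \<in> fsupp G k \<and> snd x \<in> zvec k"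
  by (cases x) (simp add: wreath_def)
lemma W_mult: "(s, m) \<otimes>\<^bsub>wreath G k\<^esub> (t, n) = (\<lambda>x. s x \<otimes>\<^bsub>G\<^esub> t (x - m), m + n)"
  by (simp add: wreath_def)
lemma W_one: "\<one>\<^bsub>wreath G k\<^esub> = (\<lambda>_. \<one>\<^bsub>G\<^esub>, 0)"
  by (simp add: wreath_def)
lemma snd_W_mult[simp]: "snd (a \<otimes>\<^bsub>wreath G k\<^esub> b) = snd a + snd b"
  by (cases a; cases b) (simp add: W_mult)
lemma fst_W_mult: "fst (a \<otimes>\<^bsub>wreath G k\<^esub> b) = (\<lambda>x. fst a x \<otimes>\<^bsub>G\<^esub> fst b (x - snd a))"
  by (cases a; cases b) (simp add: W_mult)

locale wr = group G for G :: "('a, 'b) monoid_scheme" + fixes k :: nat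
begin

lemma G: "group G" by (rule is_group)

lemma fsupp_mult:
  assumes s: "s \<in> fsupp G k" and t: "t \<in> fsupp G k" and m: "m \<in> zvec k"
  shows "(\<lambda>x. s x \<otimes>\<^bsub>G\<^esub> t (x - m)) \<in> fsupp G k"
proof -
  have sc: "\<And>x. s x \<in> carrier G" and tc: "\<And>x. t x \<in> carrier G" using s t by (auto simp: fsupp_def)
  have "{x. s x \<otimes>\<^bsub>G\<^esub> t (x - m) \<noteq> \<one>\<^bsub>G\<^esub>} \<subseteq> {x. s x \<noteq> \<one>\<^bsub>G\<^esub>} \<union> (\<lambda>y. y + m) ` {y. t y \<noteq> \<one>\<^bsub>G\<^esub>}"
  proof
    fix x assume "x \<in> {x. s x \<otimes>\<^bsub>G\<^esub> t (x - m) \<noteq> \<one>\<^bsub>G\<^esub>}"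
    then have "s x \<noteq> \<one>\<^bsub>G\<^esub> \<or> t (x - m) \<noteq> \<one>\<^bsub>G\<^esub>" by auto
    moreover have "x = (x - m) + m" by simp
    ultimately show "x \<in> {x. s x \<noteq> \<one>\<^bsub>G\<^esub>} \<union> (\<lambda>y. y + m) ` {y. t y \<noteq> \<one>\<^bsub>G\<^esub>}" by blast
  qed
  moreover have "finite ({x. s x \<noteq> \<one>\<^bsub>G\<^esub>} \<union> (\<lambda>y. y + m) ` {y. t y \<noteq> \<one>\<^bsub>G\<^esub>})"
    using s t by (simp add: fsupp_def)
  ultimately have "finite {x. s x \<otimes>\<^bsub>G\<^esub> t (x - m) \<noteq> \<one>\<^bsub>G\<^esub>}" by (rule finite_subset)
  moreover have "\<forall>x. x \<notin> zvec k \<longrightarrow> s x \<otimes>\<^bsub>G\<^esub> t (x - m) = \<one>\<^bsub>G\<^esub>"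
    using s t m zvec_shift[OF m] by (simp add: fsupp_def)
  ultimately show ?thesis using sc tc by (simp add: fsupp_def)
qed

lemma fsupp_inv:
  assumes s: "s \<in> fsupp G k" and m: "m \<in> zvec k"
  shows "(\<lambda>x. inv\<^bsub>G\<^esub> s (x + m)) \<in> fsupp G k"
proof -
  have sc: "\<And>x. s x \<in> carrier G" using s by (auto simp: fsupp_def)
  have "{x. inv\<^bsub>G\<^esub> s (x + m) \<noteq> \<one>\<^bsub>G\<^esub>} \<subseteq> (\<lambda>y. y - m) ` {y. s y \<noteq> \<one>\<^bsub>G\<^esub>}"
  proof
    fix x assume "x \<in> {x. inv\<^bsub>G\<^esub> s (x + m) \<noteq> \<one>\<^bsub>G\<^esub>}"
    then have "s (x + m) \<noteq> \<one>\<^bsub>G\<^esub>" by auto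
    moreover have "x = (x + m) - m" by simp
    ultimately show "x \<in> (\<lambda>y. y - m) ` {y. s y \<noteq> \<one>\<^bsub>G\<^esub>}" by blast
  qed
  moreover have "finite {y. s y \<noteq> \<one>\<^bsub>G\<^esub>}" using s by (simp add: fsupp_def)
  ultimately have "finite {x. inv\<^bsub>G\<^esub> s (x + m) \<noteq> \<one>\<^bsub>G\<^esub>}"
    by (meson finite_imageI finite_subset)
  moreover have "\<forall>x. x \<notin> zvec k \<longrightarrow> inv\<^bsub>G\<^esub> s (x + m) = \<one>\<^bsub>G\<^esub>"
    using s zvec_shift'[OF m] by (simp add: fsupp_def)
  ultimately show ?thesis using sc by (simp add: fsupp_def)
qed

lemma one_fsupp: "(\<lambda>_. \<one>\<^bsub>G\<^esub>) \<in> fsupp G k"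
  using G by (simp add: fsupp_def group.is_monoid monoid.one_closed)

lemma W_group: "group (wreath G k)"
proof -
  show ?thesis
  proof (rule groupI)
    fix x y assume "x \<in> carrier (wreath G k)" "y \<in> carrier (wreath G k)"
    then show "x \<otimes>\<^bsub>wreath G k\<^esub> y \<in> carrier (wreath G k)"
      by (cases x; cases y) (simp add: W_mult W_carrier fsupp_mult)
  next
    show "\<one>\<^bsub>wreath G k\<^esub> \<in> carrier (wreath G k)" by (simp add: W_one W_carrier one_fsupp)
  next
    fix x y z assume xyz: "x \<in> carrier (wreath G k)" "y \<in> carrier (wreath G k)" "z \<in> carrier (wreath G k)"
    obtain s m t n u p where e: "x = (s, m)" "y = (t, n)" "z = (u, p)" by (cases x; cases y; cases z) auto
    have c: "\<And>x. s x \<in> carrier G" "\<And>x. t x \<in> carrier G" "\<And>x. u x \<in> carrier G"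
      using xyz e by (auto simp: W_carrier fsupp_def)
    show "x \<otimes>\<^bsub>wreath G k\<^esub> y \<otimes>\<^bsub>wreath G k\<^esub> z = x \<otimes>\<^bsub>wreath G k\<^esub> (y \<otimes>\<^bsub>wreath G k\<^esub> z)"
      unfolding e W_mult by (simp add: fun_eq_iff m_assoc c diff_diff_eq add.assoc)
  next
    fix x assume x: "x \<in> carrier (wreath G k)"
    obtain s m where e: "x = (s, m)" by (cases x)
    have c: "\<And>y. s y \<in> carrier G" using x e by (simp add: W_carrier fsupp_def)
    show "\<one>\<^bsub>wreath G k\<^esub> \<otimes>\<^bsub>wreath G k\<^esub> x = x"
      unfolding e W_one W_mult by (simp add: c)
  next
    fix x assume x: "x \<in> carrier (wreath G k)"
    obtain s m where xe: "x = (s, m)" by (cases x)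
    have s: "s \<in> fsupp G k" and m: "m \<in> zvec k" using x xe by (auto simp: W_carrier)
    let ?y = "(\<lambda>x. inv\<^bsub>G\<^esub> s (x + m), - m)"
    have "?y \<in> carrier (wreath G k)" using fsupp_inv[OF s m] m by (simp add: W_carrier)
    moreover have "?y \<otimes>\<^bsub>wreath G k\<^esub> x = \<one>\<^bsub>wreath G k\<^esub>"
      using s unfolding xe W_mult W_one by (simp add: fsupp_def)
    ultimately show "\<exists>y\<in>carrier (wreath G k). y \<otimes>\<^bsub>wreath G k\<^esub> x = \<one>\<^bsub>wreath G k\<^esub>" by blast
  qed
qed

lemma W_inv:
  assumes "(s, m) \<in> carrier (wreath G k)"
  shows "inv\<^bsub>wreath G k\<^esub> (s, m) = (\<lambda>x. inv\<^bsub>G\<^esub> s (x + m), - m)"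
proof -
  have s: "s \<in> fsupp G k" and m: "m \<in> zvec k" using assms by (auto simp: W_carrier)
  show ?thesis
  proof (rule group.inv_equality[OF W_group])
    show "(\<lambda>x. inv\<^bsub>G\<^esub> s (x + m), - m) \<otimes>\<^bsub>wreath G k\<^esub> (s, m) = \<one>\<^bsub>wreath G k\<^esub>"
      using s unfolding W_mult W_one by (simp add: fsupp_def)
    show "(\<lambda>x. inv\<^bsub>G\<^esub> s (x + m), - m) \<in> carrier (wreath G k)"
      using fsupp_inv[OF s m] m by (simp add: W_carrier)
  qed (rule assms)
qed

lemma snd_W_inv[simp]: "x \<in> carrier (wreath G k) \<Longrightarrow> snd (inv\<^bsub>wreath G k\<^esub> x) = - snd x"
  by (cases x) (simp add: W_inv)

lemma zelt_carrier[simp]: "m \<in> zvec k \<Longrightarrow> zelt G m \<in> carrier (wreath G k)"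
  by (simp add: zelt_def W_carrier one_fsupp)

lemma snd_zelt[simp]: "snd (zelt G m) = m" by (simp add: zelt_def)

lemma zelt_mult: "zelt G m \<otimes>\<^bsub>wreath G k\<^esub> zelt G n = zelt G (m + n)"
  using G by (simp add: zelt_def W_mult)

lemma sigma_subgroup: "subgroup {h \<in> carrier (wreath G k). snd h = 0} (wreath G k)"
proof -
  interpret W: group "wreath G k" by (rule W_group)
  show ?thesis
    by (rule W.subgroupI) (auto simp: W_one W_carrier intro!: exI[of _ "\<lambda>_. \<one>\<^bsub>G\<^esub>"] one_fsupp)
qed

lemma sigma_group: "group (sigma_grp G k)"
  unfolding sigma_grp_def by (rule group.subgroup_imp_group[OF W_group sigma_subgroup])

lemma sigma_carrier: "carrier (sigma_grp G k) = {h \<in> carrier (wreath G k). snd h = 0}"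
  by (simp add: sigma_grp_def)
lemma sigma_mult: "monoid.mult (sigma_grp G k) = monoid.mult (wreath G k)"
  by (simp add: sigma_grp_def)
lemma sigma_inv: "h \<in> carrier (sigma_grp G k) \<Longrightarrow> inv\<^bsub>sigma_grp G k\<^esub> h = inv\<^bsub>wreath G k\<^esub> h"
  unfolding sigma_grp_def by (rule group.m_inv_consistent[OF W_group sigma_subgroup]) (simp add: sigma_grp_def)

lemma W_decomp:
  assumes "x \<in> carrier (wreath G k)"
  shows "x = (fst x, 0) \<otimes>\<^bsub>wreath G k\<^esub> zelt G (snd x)"
proof -
  obtain s m where e: "x = (s, m)" by (cases x)
  have c: "\<And>y. s y \<in> carrier G" using assms e by (simp add: W_carrier fsupp_def)
  show ?thesis unfolding e zelt_def by (simp add: W_mult c)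
qed

end


lemma zgrp_carrier[simp]: "carrier (zgrp k) = zvec k" by (simp add: zgrp_def)
lemma zgrp_mult[simp]: "a \<otimes>\<^bsub>zgrp k\<^esub> b = a + b" by (simp add: zgrp_def)
lemma zgrp_one[simp]: "\<one>\<^bsub>zgrp k\<^esub> = 0" by (simp add: zgrp_def)

lemma zgrp_group: "group (zgrp k)"
  by (rule groupI) (auto simp: add.assoc intro!: bexI[of _ "- _"])

lemma zgrp_inv[simp]: "m \<in> zvec k \<Longrightarrow> inv\<^bsub>zgrp k\<^esub> m = - m"
  by (rule group.inv_equality[OF zgrp_group]) auto

locale wrp = wr G k for G :: "('a, 'b) monoid_scheme" and k :: nat +
  fixes \<phi>
  assumes fin: "finite (carrier G)" and iso: "\<phi> \<in> iso (wreath G k) (wreath G k)"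
begin

abbreviation "W \<equiv> wreath G k"
abbreviation "phib \<equiv> induced_bar G \<phi>"

lemma W_grp: "group W" by (rule W_group)

lemma phi_hom: "\<phi> \<in> hom W W" using iso by (simp add: iso_def)

lemma phi_ghom: "group_hom W W \<phi>"
  using phi_hom W_grp by (simp add: group_hom_def group_hom_axioms_def)

lemma phi_carrier[simp]: "x \<in> carrier W \<Longrightarrow> \<phi> x \<in> carrier W"
  by (rule group_hom.hom_closed[OF phi_ghom])

lemma phi_mult: "x \<in> carrier W \<Longrightarrow> y \<in> carrier W \<Longrightarrow> \<phi> (x \<otimes>\<^bsub>W\<^esub> y) = \<phi> x \<otimes>\<^bsub>W\<^esub> \<phi> y"
  using phi_hom by (simp add: hom_def)

lemma phi_inv: "x \<in> carrier W \<Longrightarrow> \<phi> (inv\<^bsub>W\<^esub> x) = inv\<^bsub>W\<^esub> (\<phi> x)"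
  by (rule group_hom.hom_inv[OF phi_ghom])

lemma W_pow_sigma:
  assumes "s \<in> fsupp G k"
  shows "(s, 0) [^]\<^bsub>W\<^esub> (n::nat) = (\<lambda>y. s y [^]\<^bsub>G\<^esub> n, 0)"
proof (induction n)
  case 0 then show ?case by (simp add: W_one fun_eq_iff)
next
  case (Suc n) then show ?case by (simp add: W_mult fun_eq_iff fun_diff_def)
qed

lemma snd_W_pow: "snd (x [^]\<^bsub>W\<^esub> (n::nat)) = (\<lambda>i. int n * snd x i)"
proof (induction n)
  case 0 then show ?case by (simp add: W_one fun_eq_iff)
next
  case (Suc n) then show ?case by (simp add: fun_eq_iff algebra_simps)
qed

lemma sigma_pres:
  assumes x: "x \<in> carrier W" and x0: "snd x = 0"
  shows "snd (\<phi> x) = 0"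
proof -
  obtain s where e: "x = (s, 0)" using x0 by (cases x) auto
  have s: "s \<in> fsupp G k" using x e by (simp add: W_carrier)
  define n where "n = Coset.order G"
  have n: "n > 0" using fin by (simp add: n_def order_gt_0_iff_finite)
  have "x [^]\<^bsub>W\<^esub> n = \<one>\<^bsub>W\<^esub>"
    using s unfolding e W_pow_sigma[OF s] W_one n_def by (simp add: fsupp_def pow_order_eq_1)
  then have "\<phi> x [^]\<^bsub>W\<^esub> n = \<one>\<^bsub>W\<^esub>"
    using group_hom.hom_nat_pow[OF phi_ghom x, of n] group_hom.hom_one[OF phi_ghom] by simp
  then have "(\<lambda>i. int n * snd (\<phi> x) i) = 0" using snd_W_pow[of "\<phi> x" n] by (simp add: W_one)
  then show ?thesis using n by (simp add: fun_eq_iff)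
qed

lemma phib_zvec[simp]: "m \<in> zvec k \<Longrightarrow> phib m \<in> zvec k"
  using phi_carrier[OF zelt_carrier] by (simp add: induced_bar_def W_carrier')

lemma snd_phi: assumes x: "x \<in> carrier W" shows "snd (\<phi> x) = phib (snd x)"
proof -
  have c1: "(fst x, 0) \<in> carrier W" using x by (simp add: W_carrier')
  have c2: "zelt G (snd x) \<in> carrier W" using x using zelt_carrier by (simp add: W_carrier')
  have "\<phi> x = \<phi> (fst x, 0) \<otimes>\<^bsub>W\<^esub> \<phi> (zelt G (snd x))"
    using W_decomp[OF x] phi_mult[OF c1 c2] by simp
  then show ?thesis using sigma_pres[OF c1] by (simp add: induced_bar_def)
qed

lemma phib_add: "m \<in> zvec k \<Longrightarrow> n \<in> zvec k \<Longrightarrow> phib (m + n) = phib m + phib n"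
  unfolding induced_bar_def
  by (metis phi_mult snd_W_mult zelt_carrier zelt_mult)

lemma phib_zero[simp]: "phib 0 = 0"
  using phib_add[of 0 0] by simp

lemma phib_uminus: "m \<in> zvec k \<Longrightarrow> phib (- m) = - phib m"
  using phib_add[of m "- m"] by (simp add: eq_neg_iff_add_eq_0 add.commute)

lemma phib_diff: "m \<in> zvec k \<Longrightarrow> n \<in> zvec k \<Longrightarrow> phib (m - n) = phib m - phib n"
  using phib_add[of m "- n"] phib_uminus[of n] by simp

lemma phib_hom: "phib \<in> hom (zgrp k) (zgrp k)"
  by (rule homI) (auto simp: phib_add)

lemma tcZ_iff: "(x, y) \<in> twisted_conj (zgrp k) phib \<longleftrightarrow>
   x \<in> zvec k \<and> y \<in> zvec k \<and> (\<exists>g\<in>zvec k. y = x + (g - phib g))"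
  unfolding twisted_conj_def by (auto simp: phib_uminus algebra_simps)

end


lemma (in group) cancel_l[simp]: "x \<in> carrier G \<Longrightarrow> y \<in> carrier G \<Longrightarrow> inv x \<otimes> (x \<otimes> y) = y"
  by (simp add: m_assoc[symmetric])
lemma (in group) cancel_r[simp]: "x \<in> carrier G \<Longrightarrow> y \<in> carrier G \<Longrightarrow> x \<otimes> (inv x \<otimes> y) = y"
  by (simp add: m_assoc[symmetric])

definition cov where
  "cov H \<psi> F \<longleftrightarrow> F \<subseteq> carrier H \<and> finite F \<and> carrier H \<subseteq> twisted_conj H \<psi> `` F"

context wrp
begin

sublocale W: group W by (rule W_grp)

abbreviation "S \<equiv> sigma_grp G k"
abbreviation "tcW \<equiv> twisted_conj W \<phi>"

lemma tcW_equiv: "equiv (carrier W) tcW"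
  by (rule W.tc_equiv[OF phi_hom])

lemma tcW_iff: "(x, y) \<in> tcW \<longleftrightarrow> x \<in> carrier W \<and> y \<in> carrier W \<and>
    (\<exists>g\<in>carrier W. y = g \<otimes>\<^bsub>W\<^esub> x \<otimes>\<^bsub>W\<^esub> \<phi> (inv\<^bsub>W\<^esub> g))"
  by (simp add: twisted_conj_def)

lemma S_carrier_iff: "h \<in> carrier S \<longleftrightarrow> h \<in> carrier W \<and> snd h = 0"
  by (simp add: sigma_carrier)

lemma tcS_iff: "(x, y) \<in> twisted_conj S \<psi> \<longleftrightarrow> x \<in> carrier S \<and> y \<in> carrier S \<and>
    (\<exists>g\<in>carrier S. y = g \<otimes>\<^bsub>W\<^esub> x \<otimes>\<^bsub>W\<^esub> \<psi> (inv\<^bsub>W\<^esub> g))"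
  unfolding twisted_conj_def using sigma_inv sigma_mult by auto

lemma tau_eq: "tau G k m y = zelt G m \<otimes>\<^bsub>W\<^esub> y \<otimes>\<^bsub>W\<^esub> inv\<^bsub>W\<^esub> zelt G m"
  by (simp add: tau_def)

lemma psi_hom:
  assumes m: "m \<in> zvec k"
  shows "(\<lambda>h. tau G k m (\<phi> h)) \<in> hom S S"
proof (rule homI)
  fix h assume "h \<in> carrier S"
  then have h: "h \<in> carrier W" "snd h = 0" by (auto simp: S_carrier_iff)
  have "snd (\<phi> h) = 0" using sigma_pres[OF h] .
  then show "tau G k m (\<phi> h) \<in> carrier S" using h m
    by (simp add: S_carrier_iff tau_eq)
next
  fix x y assume "x \<in> carrier S" "y \<in> carrier S"
  then have x: "x \<in> carrier W" and y: "y \<in> carrier W" by (auto simp: S_carrier_iff)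
  have z: "zelt G m \<in> carrier W" using m by simp
  show "tau G k m (\<phi> (x \<otimes>\<^bsub>S\<^esub> y)) = tau G k m (\<phi> x) \<otimes>\<^bsub>S\<^esub> tau G k m (\<phi> y)"
    unfolding sigma_mult tau_eq using x y z by (simp add: phi_mult W.m_assoc)
qed

lemma snd_phi_inv[simp]: assumes g: "g \<in> carrier W" shows "snd (\<phi> (inv\<^bsub>W\<^esub> g)) = - phib (snd g)"
proof -
  have "snd (\<phi> (inv\<^bsub>W\<^esub> g)) = phib (snd (inv\<^bsub>W\<^esub> g))" using g by (simp add: snd_phi)
  also have "\<dots> = - phib (snd g)" using g by (simp add: phib_uminus W_carrier')
  finally show ?thesis .
qed

lemma A_cov:
  assumes "cov W \<phi> F"
  shows "cov (zgrp k) phib (snd ` F)"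
proof -
  have F: "F \<subseteq> carrier W" "finite F" "carrier W \<subseteq> tcW `` F" using assms by (auto simp: cov_def)
  have "zvec k \<subseteq> twisted_conj (zgrp k) phib `` (snd ` F)"
  proof
    fix n assume n: "n \<in> zvec k"
    then have "zelt G n \<in> carrier W" by simp
    then obtain f where f: "f \<in> F" "(f, zelt G n) \<in> tcW" using F by blast
    then obtain g where g: "g \<in> carrier W" and e: "zelt G n = g \<otimes>\<^bsub>W\<^esub> f \<otimes>\<^bsub>W\<^esub> \<phi> (inv\<^bsub>W\<^esub> g)"
      by (auto simp: tcW_iff)
    have fc: "f \<in> carrier W" using f F by auto
    have "n = snd (g \<otimes>\<^bsub>W\<^esub> f \<otimes>\<^bsub>W\<^esub> \<phi> (inv\<^bsub>W\<^esub> g))" by (metis e snd_zelt)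
    also have "\<dots> = snd f + (snd g - phib (snd g))"
      using g by (simp add: snd_phi phib_uminus W_carrier')
    finally have "(snd f, n) \<in> twisted_conj (zgrp k) phib"
      using fc g n by (auto simp: tcZ_iff W_carrier')
    then show "n \<in> twisted_conj (zgrp k) phib `` (snd ` F)" using f by blast
  qed
  then show ?thesis using F by (auto simp: cov_def W_carrier')
qed

lemma B_cov:
  assumes cv: "cov W \<phi> F" and fix0: "\<forall>z\<in>zvec k. phib z = z \<longrightarrow> z = 0" and m: "m \<in> zvec k"
  shows "\<exists>F'. cov S (\<lambda>h. tau G k m (\<phi> h)) F'"
proof -
  let ?zm = "zelt G m"
  have zm: "?zm \<in> carrier W" using m by simp
  have F: "F \<subseteq> carrier W" "finite F" "carrier W \<subseteq> tcW `` F" using cv by (auto simp: cov_def)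
  define P where "P f h \<longleftrightarrow> h \<in> carrier S \<and> (f, h \<otimes>\<^bsub>W\<^esub> ?zm) \<in> tcW" for f h
  define Sf where "Sf = {f \<in> F. \<exists>h. P f h}"
  define ch where "ch f = (SOME h. P f h)" for f
  have chP: "P f (ch f)" if "f \<in> Sf" for f
    using that unfolding Sf_def ch_def by (metis (mono_tags, lifting) mem_Collect_eq someI_ex)
  define F' where "F' = ch ` Sf"
  have "F' \<subseteq> carrier S" using chP by (auto simp: F'_def P_def)
  moreover have "finite F'" using F by (simp add: F'_def Sf_def)
  moreover have "carrier S \<subseteq> twisted_conj S (\<lambda>h. tau G k m (\<phi> h)) `` F'"
  proof
    fix h assume hS: "h \<in> carrier S"
    then have h: "h \<in> carrier W" "snd h = 0" by (auto simp: S_carrier_iff)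
    have "h \<otimes>\<^bsub>W\<^esub> ?zm \<in> carrier W" using h zm by simp
    then obtain f where f: "f \<in> F" "(f, h \<otimes>\<^bsub>W\<^esub> ?zm) \<in> tcW" using F by blast
    then have fS: "f \<in> Sf" using hS unfolding Sf_def P_def by blast
    define h' where "h' = ch f"
    have h'P: "P f h'" using chP[OF fS] by (simp add: h'_def)
    then have h'S: "h' \<in> carrier S" and f2: "(f, h' \<otimes>\<^bsub>W\<^esub> ?zm) \<in> tcW" by (auto simp: P_def)
    have h': "h' \<in> carrier W" "snd h' = 0" using h'S by (auto simp: S_carrier_iff)
    have "(h' \<otimes>\<^bsub>W\<^esub> ?zm, h \<otimes>\<^bsub>W\<^esub> ?zm) \<in> tcW"
      using f(2) f2 tcW_equiv by (meson equivE symD transD)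
    then obtain g where g: "g \<in> carrier W"
      and e: "h \<otimes>\<^bsub>W\<^esub> ?zm = g \<otimes>\<^bsub>W\<^esub> (h' \<otimes>\<^bsub>W\<^esub> ?zm) \<otimes>\<^bsub>W\<^esub> \<phi> (inv\<^bsub>W\<^esub> g)"
      by (auto simp: tcW_iff)
    have "snd (h \<otimes>\<^bsub>W\<^esub> ?zm) = snd (g \<otimes>\<^bsub>W\<^esub> (h' \<otimes>\<^bsub>W\<^esub> ?zm) \<otimes>\<^bsub>W\<^esub> \<phi> (inv\<^bsub>W\<^esub> g))"
      using e by simp
    then have "m = snd g + m - phib (snd g)"
      using g h h' by (simp add: snd_phi phib_uminus W_carrier')
    then have "phib (snd g) = snd g" by (simp add: algebra_simps)
    then have g0: "snd g = 0" using fix0 g by (simp add: W_carrier')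
    then have gS: "g \<in> carrier S" using g by (simp add: S_carrier_iff)
    have "h = (h \<otimes>\<^bsub>W\<^esub> ?zm) \<otimes>\<^bsub>W\<^esub> inv\<^bsub>W\<^esub> ?zm" using h zm by (simp add: W.m_assoc)
    also have "\<dots> = g \<otimes>\<^bsub>W\<^esub> h' \<otimes>\<^bsub>W\<^esub> tau G k m (\<phi> (inv\<^bsub>W\<^esub> g))"
      unfolding e tau_eq using g h' zm by (simp add: W.m_assoc)
    finally have "(h', h) \<in> twisted_conj S (\<lambda>h. tau G k m (\<phi> h))"
      using h'S hS gS by (auto simp: tcS_iff)
    moreover have "h' \<in> F'" using fS by (simp add: F'_def h'_def)
    ultimately show "h \<in> twisted_conj S (\<lambda>h. tau G k m (\<phi> h)) `` F'" by blast
  qed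
  ultimately show ?thesis unfolding cov_def by blast
qed

lemma C_cov:
  assumes M: "finite M" "M \<subseteq> zvec k" "zvec k \<subseteq> twisted_conj (zgrp k) phib `` M"
    and cS: "\<forall>m\<in>M. \<exists>F. cov S (\<lambda>h. tau G k m (\<phi> h)) F"
  shows "\<exists>F. cov W \<phi> F"
proof -
  from cS obtain Fs where Fs: "\<And>m. m \<in> M \<Longrightarrow> cov S (\<lambda>h. tau G k m (\<phi> h)) (Fs m)"
    by metis
  define F where "F = (\<Union>m\<in>M. (\<lambda>h. h \<otimes>\<^bsub>W\<^esub> zelt G m) ` Fs m)"
  have "finite F" using M Fs by (simp add: F_def cov_def)
  moreover have "F \<subseteq> carrier W"
  proof
    fix x assume "x \<in> F"
    then obtain m h where mh: "m \<in> M" "h \<in> Fs m" "x = h \<otimes>\<^bsub>W\<^esub> zelt G m" by (auto simp: F_def)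
    then have "h \<in> carrier S" using Fs[of m] by (auto simp: cov_def)
    then have "h \<in> carrier W" by (simp add: S_carrier_iff)
    moreover have "zelt G m \<in> carrier W" using mh M by auto
    ultimately show "x \<in> carrier W" using mh by simp
  qed
  moreover have "carrier W \<subseteq> tcW `` F"
  proof
    fix x assume x: "x \<in> carrier W"
    then have "snd x \<in> zvec k" by (simp add: W_carrier')
    then obtain m where mM: "m \<in> M" and "(m, snd x) \<in> twisted_conj (zgrp k) phib" using M by blast
    then obtain z where z: "z \<in> zvec k" and nx: "snd x = m + (z - phib z)" by (auto simp: tcZ_iff)
    have m: "m \<in> zvec k" using mM M by auto
    let ?g = "zelt G (- z)"
    have gc: "?g \<in> carrier W" using z by simp
    define y where "y = ?g \<otimes>\<^bsub>W\<^esub> x \<otimes>\<^bsub>W\<^esub> \<phi> (inv\<^bsub>W\<^esub> ?g)"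
    have yc: "y \<in> carrier W" using gc x by (simp add: y_def)
    have xy: "(x, y) \<in> tcW" using x yc gc by (auto simp: tcW_iff y_def)
    have "snd y = - z + snd x + phib z" using gc z by (simp add: y_def snd_phi)
    then have sy: "snd y = m" using nx by simp
    let ?zm = "zelt G m"
    have zm: "?zm \<in> carrier W" using m by simp
    define h where "h = y \<otimes>\<^bsub>W\<^esub> inv\<^bsub>W\<^esub> ?zm"
    have hS: "h \<in> carrier S" using yc zm sy by (simp add: h_def S_carrier_iff)
    then obtain f where f: "f \<in> Fs m" and "(f, h) \<in> twisted_conj S (\<lambda>h. tau G k m (\<phi> h))"
      using Fs[OF mM] by (auto simp: cov_def)
    then obtain a where aS: "a \<in> carrier S" and fS: "f \<in> carrier S"
      and e: "h = a \<otimes>\<^bsub>W\<^esub> f \<otimes>\<^bsub>W\<^esub> tau G k m (\<phi> (inv\<^bsub>W\<^esub> a))"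
      by (auto simp: tcS_iff)
    have a: "a \<in> carrier W" and fc: "f \<in> carrier W" using aS fS by (auto simp: S_carrier_iff)
    have "y = h \<otimes>\<^bsub>W\<^esub> ?zm" using yc zm by (simp add: h_def W.m_assoc)
    also have "\<dots> = a \<otimes>\<^bsub>W\<^esub> (f \<otimes>\<^bsub>W\<^esub> ?zm) \<otimes>\<^bsub>W\<^esub> \<phi> (inv\<^bsub>W\<^esub> a)"
      unfolding e tau_eq using a fc zm by (simp add: W.m_assoc)
    finally have "(f \<otimes>\<^bsub>W\<^esub> ?zm, y) \<in> tcW" using a fc zm yc by (auto simp: tcW_iff)
    then have "(f \<otimes>\<^bsub>W\<^esub> ?zm, x) \<in> tcW" using xy tcW_equiv by (meson equivE symD transD)
    moreover have "f \<otimes>\<^bsub>W\<^esub> ?zm \<in> F" using mM f by (auto simp: F_def)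
    ultimately show "x \<in> tcW `` F" by blast
  qed
  ultimately show ?thesis unfolding cov_def by blast
qed

end
definition ev :: "nat \<Rightarrow> nat \<Rightarrow> int" where "ev i = (\<lambda>j. if j = i then 1 else 0)"
definition sm :: "int \<Rightarrow> (nat \<Rightarrow> int) \<Rightarrow> (nat \<Rightarrow> int)" where "sm c x = (\<lambda>i. c * x i)"
definition tr :: "nat \<Rightarrow> (nat \<Rightarrow> int) \<Rightarrow> (nat \<Rightarrow> int)" where "tr n v = (\<lambda>i. if i < n then v i else 0)"

lemma ev_zvec: "i < k \<Longrightarrow> ev i \<in> zvec k" by (simp add: ev_def zvec_def)
lemma sm_zvec: "x \<in> zvec k \<Longrightarrow> sm c x \<in> zvec k" by (simp add: sm_def zvec_def)
lemma tr_zvec: "n \<le> k \<Longrightarrow> tr n v \<in> zvec k" by (simp add: tr_def zvec_def)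
lemma add_zvec: "a \<in> zvec k \<Longrightarrow> b \<in> zvec k \<Longrightarrow> a + b \<in> zvec k" by (simp add: zvec_def)
lemma neg_zvec: "a \<in> zvec k \<Longrightarrow> - a \<in> zvec k" by (simp add: zvec_def)

locale addmap =
  fixes k :: nat and \<psi> :: "(nat \<Rightarrow> int) \<Rightarrow> (nat \<Rightarrow> int)"
  assumes add: "\<And>a b. a \<in> zvec k \<Longrightarrow> b \<in> zvec k \<Longrightarrow> \<psi> (a + b) = \<psi> a + \<psi> b"
begin

lemma zero: "\<psi> 0 = 0"
  using add[of 0 0] by (simp add: zvec_def)

lemma neg: "a \<in> zvec k \<Longrightarrow> \<psi> (- a) = - \<psi> a"
  using add[of a "- a"] zero by (simp add: neg_zvec eq_neg_iff_add_eq_0 add.commute)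

lemma smul_nat: "a \<in> zvec k \<Longrightarrow> \<psi> (sm (int n) a) = sm (int n) (\<psi> a)"
proof (induction n)
  case 0 then show ?case using zero by (simp add: sm_def fun_eq_iff zero_fun_def)
next
  case (Suc n)
  have "sm (int (Suc n)) a = sm (int n) a + a" by (simp add: sm_def fun_eq_iff algebra_simps)
  then have "\<psi> (sm (int (Suc n)) a) = \<psi> (sm (int n) a) + \<psi> a"
    using add[OF sm_zvec Suc.prems] Suc.prems by simp
  then show ?case using Suc by (simp add: sm_def fun_eq_iff algebra_simps)
qed

lemma smul: "a \<in> zvec k \<Longrightarrow> \<psi> (sm c a) = sm c (\<psi> a)"
proof (cases "c \<ge> 0")
  case True
  then have "c = int (nat c)" by simp
  then show "a \<in> zvec k \<Longrightarrow> ?thesis" using smul_nat[of a "nat c"] by metis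
next
  case False
  define n where "n = nat (- c)"
  have n: "c = - int n" using False by (simp add: n_def)
  assume a: "a \<in> zvec k"
  have "sm c a = - sm (int n) a" by (simp add: n sm_def fun_eq_iff)
  then have "\<psi> (sm c a) = - \<psi> (sm (int n) a)" using neg[OF sm_zvec[OF a]] by simp
  then show ?thesis using smul_nat[OF a] by (simp add: n sm_def fun_eq_iff)
qed

lemma lin_tr: "n \<le> k \<Longrightarrow> \<psi> (tr n v) = (\<lambda>i. \<Sum>j<n. v j * \<psi> (ev j) i)"
proof (induction n)
  case 0
  have "tr 0 v = 0" by (simp add: tr_def fun_eq_iff)
  then show ?case using zero by (simp add: zero_fun_def)
next
  case (Suc n)
  have "tr (Suc n) v = tr n v + sm (v n) (ev n)" by (auto simp: tr_def sm_def ev_def fun_eq_iff less_Suc_eq)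
  then have "\<psi> (tr (Suc n) v) = \<psi> (tr n v) + sm (v n) (\<psi> (ev n))"
    using add[OF tr_zvec sm_zvec[OF ev_zvec]] smul[OF ev_zvec] Suc.prems by simp
  then show ?case using Suc by (simp add: sm_def fun_eq_iff)
qed

lemma lin: "v \<in> zvec k \<Longrightarrow> \<psi> v i = (\<Sum>j<k. v j * \<psi> (ev j) i)"
proof -
  assume v: "v \<in> zvec k"
  have "tr k v = v" using v by (auto simp: tr_def zvec_def fun_eq_iff)
  then show ?thesis using lin_tr[of k v] by (metis order.refl)
qed

end

lemma fix_trivial:
  fixes f :: "(nat \<Rightarrow> int) \<Rightarrow> (nat \<Rightarrow> int)"
  assumes add: "\<And>a b. a \<in> zvec k \<Longrightarrow> b \<in> zvec k \<Longrightarrow> f (a + b) = f a + f b"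
    and into: "\<And>a. a \<in> zvec k \<Longrightarrow> f a \<in> zvec k"
    and fin: "finite (zvec k // {(x, y). x \<in> zvec k \<and> y \<in> zvec k \<and> (\<exists>g\<in>zvec k. y = x + (g - f g))})"
    and z: "z \<in> zvec k" and fz: "f z = z"
  shows "z = 0"
proof -
  define \<psi> where "\<psi> v = v - f v" for v
  define R where "R = {(x, y). x \<in> zvec k \<and> y \<in> zvec k \<and> (\<exists>g\<in>zvec k. y = x + \<psi> g)}"
  interpret addmap k \<psi>
    by unfold_locales (simp add: \<psi>_def add)
  have fin': "finite (zvec k // R)" using fin by (simp add: R_def \<psi>_def)
  have \<psi>z: "\<psi> z = 0" using fz by (simp add: \<psi>_def)
  have step1: "\<exists>c w. c > 0 \<and> w \<in> zvec k \<and> \<psi> w = sm c (ev i)" if i: "i < k" for i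
  proof -
    define h where "h n = R `` {sm (int n) (ev i)}" for n
    have "range h \<subseteq> zvec k // R"
      using ev_zvec[OF i] sm_zvec by (auto simp: h_def quotient_def)
    then have "finite (range h)" using fin' finite_subset by blast
    then have "\<not> inj h" using infinite_UNIV_nat finite_imageD by blast
    then obtain a b where ab: "a \<noteq> b" "h a = h b" by (meson injI)
    have z0: "0 \<in> zvec k" by (simp add: zvec_def)
    have sz: "sm (int b) (ev i) \<in> zvec k" using ev_zvec[OF i] sm_zvec by blast
    have "sm (int b) (ev i) = sm (int b) (ev i) + \<psi> 0" using zero by simp
    then have "sm (int b) (ev i) \<in> h b" using sz z0
      unfolding h_def R_def by blast
    then have "sm (int b) (ev i) \<in> h a" using ab by simp
    then obtain g where g: "g \<in> zvec k" and e: "sm (int b) (ev i) = sm (int a) (ev i) + \<psi> g"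
      by (auto simp: h_def R_def)
    have pg: "\<psi> g = sm (int b - int a) (ev i)" using e by (auto simp: sm_def fun_eq_iff algebra_simps)
    show ?thesis
    proof (cases "a < b")
      case True then have "int b - int a > 0" by simp
      then show ?thesis using g pg by blast
    next
      case False
      then have "int a - int b > 0" using ab by simp
      moreover have "\<psi> (- g) = sm (int a - int b) (ev i)" using neg[OF g] pg by (simp add: sm_def fun_eq_iff algebra_simps)
      ultimately show ?thesis using neg_zvec[OF g] by blast
    qed
  qed
  then obtain c w where cw: "\<And>i. i < k \<Longrightarrow> c i > 0 \<and> w i \<in> zvec k \<and> \<psi> (w i) = sm (c i) (ev i)"
    by metis
  define A :: "rat mat" where "A = mat k k (\<lambda>(i, j). of_int (\<psi> (ev j) i))"
  define B :: "rat mat" where "B = mat k k (\<lambda>(i, j). of_int (w j i) / of_int (c j))"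
  have AB: "A * B = 1\<^sub>m k"
  proof (rule eq_matI)
    fix i j assume ij: "i < dim_row (1\<^sub>m k :: rat mat)" "j < dim_col (1\<^sub>m k :: rat mat)"
    then have ij: "i < k" "j < k" by auto
    have "(A * B) $$ (i, j) = (\<Sum>l = 0..<k. of_int (\<psi> (ev l) i) * (of_int (w j l) / of_int (c j)))"
      using ij by (simp add: A_def B_def scalar_prod_def)
    also have "\<dots> = (\<Sum>l = 0..<k. of_int (w j l * \<psi> (ev l) i)) / (of_int (c j) :: rat)"
      by (simp add: sum_divide_distrib mult.commute)
    also have "\<dots> = of_int (\<Sum>l<k. w j l * \<psi> (ev l) i) / of_int (c j)"
      by (simp add: atLeast0LessThan)
    also have "(\<Sum>l<k. w j l * \<psi> (ev l) i) = \<psi> (w j) i" using lin[of "w j" i] cw[OF ij(2)] by simp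
    also have "\<dots> = (if i = j then c j else 0)" using cw[OF ij(2)] by (simp add: sm_def ev_def)
    finally show "(A * B) $$ (i, j) = 1\<^sub>m k $$ (i, j)" using ij cw[OF ij(2)] by simp
  qed (auto simp: A_def B_def)
  have BA: "B * A = 1\<^sub>m k"
    by (rule mat_mult_left_right_inverse[OF _ _ AB]) (auto simp: A_def B_def)
  have "z i = 0" if i: "i < k" for i
  proof -
    have "(\<Sum>j = 0..<k. (1\<^sub>m k :: rat mat) $$ (i, j) * of_int (z j)) =
          (\<Sum>j = 0..<k. if i = j then (of_int (z j) :: rat) else 0)"
      using i by (intro sum.cong) auto
    then have "of_int (z i) = (\<Sum>j = 0..<k. (1\<^sub>m k :: rat mat) $$ (i, j) * of_int (z j))"
      using i by simp
    also have "\<dots> = (\<Sum>j = 0..<k. (\<Sum>l = 0..<k. B $$ (i, l) * A $$ (l, j)) * of_int (z j))"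
    proof (rule sum.cong[OF refl])
      fix j assume j: "j \<in> {0..<k}"
      have dA: "dim_row A = k" "dim_col A = k" and dB: "dim_row B = k" "dim_col B = k"
        by (simp_all add: A_def B_def)
      have "(1\<^sub>m k :: rat mat) $$ (i, j) = (B * A) $$ (i, j)" by (simp only: BA)
      also have "\<dots> = (\<Sum>l = 0..<k. B $$ (i, l) * A $$ (l, j))"
        using i j dA dB by (simp add: scalar_prod_def)
      finally show "(1\<^sub>m k :: rat mat) $$ (i, j) * of_int (z j) =
          (\<Sum>l = 0..<k. B $$ (i, l) * A $$ (l, j)) * of_int (z j)" by simp
    qed
    also have "\<dots> = (\<Sum>j = 0..<k. \<Sum>l = 0..<k. B $$ (i, l) * (A $$ (l, j) * of_int (z j)))"
      by (simp add: sum_distrib_right mult.assoc)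
    also have "\<dots> = (\<Sum>l = 0..<k. \<Sum>j = 0..<k. B $$ (i, l) * (A $$ (l, j) * of_int (z j)))"
      by (rule sum.swap)
    also have "\<dots> = (\<Sum>l = 0..<k. B $$ (i, l) * (\<Sum>j = 0..<k. A $$ (l, j) * of_int (z j)))"
      by (simp add: sum_distrib_left)
    also have "\<dots> = (\<Sum>l = 0..<k. B $$ (i, l) * of_int (\<psi> z l))"
    proof (rule sum.cong[OF refl])
      fix l assume l: "l \<in> {0..<k}"
      have "(\<Sum>j = 0..<k. A $$ (l, j) * of_int (z j)) = of_int (\<Sum>j<k. z j * \<psi> (ev j) l)"
        using l by (simp add: A_def atLeast0LessThan mult.commute)
      also have "\<dots> = of_int (\<psi> z l)" using lin[OF z, of l] by simp
      finally show "B $$ (i, l) * (\<Sum>j = 0..<k. A $$ (l, j) * of_int (z j)) = B $$ (i, l) * of_int (\<psi> z l)"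
        by simp
    qed
    also have "\<dots> = 0" using \<psi>z by simp
    finally show ?thesis by simp
  qed
  note zlt = this
  have "z i = 0" for i
  proof (cases "i < k")
    case True then show ?thesis by (rule zlt)
  next
    case False then show ?thesis using z by (simp add: zvec_def)
  qed
  then show ?thesis by (simp add: fun_eq_iff)
qed



context wrp
begin

lemma tcZ_eq: "twisted_conj (zgrp k) phib =
   {(x, y). x \<in> zvec k \<and> y \<in> zvec k \<and> (\<exists>g\<in>zvec k. y = x + (g - phib g))}"
  using tcZ_iff by auto

lemma fix0:
  assumes "finite (reidemeister_classes (zgrp k) phib)"
  shows "\<forall>z\<in>zvec k. phib z = z \<longrightarrow> z = 0"
  using fix_trivial[of k phib] assms phib_add
  by (auto simp: reidemeister_classes_def tcZ_eq)

lemma RW: "reidemeister_number W \<phi> < \<infinity> \<longleftrightarrow> (\<exists>F. cov W \<phi> F)"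
  using R_fin_iff[OF W_grp phi_hom] by (simp add: cov_def)
lemma RZ: "reidemeister_number (zgrp k) phib < \<infinity> \<longleftrightarrow> (\<exists>F. cov (zgrp k) phib F)"
  using R_fin_iff[OF zgrp_group phib_hom] by (simp add: cov_def)
lemma RS: "m \<in> zvec k \<Longrightarrow> reidemeister_number S (\<lambda>h. tau G k m (\<phi> h)) < \<infinity> \<longleftrightarrow>
   (\<exists>F. cov S (\<lambda>h. tau G k m (\<phi> h)) F)"
  using R_fin_iff[OF sigma_group psi_hom] by (simp add: cov_def)

lemma RZ_fin: "reidemeister_number (zgrp k) phib < \<infinity> \<longleftrightarrow> finite (reidemeister_classes (zgrp k) phib)"
  by (simp add: reidemeister_number_def)

lemma main1:
  "reidemeister_number W \<phi> < \<infinity> \<longleftrightarrow>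
     reidemeister_number (zgrp k) phib < \<infinity> \<and>
     (\<forall>m \<in> zvec k. reidemeister_number S (\<lambda>h. tau G k m (\<phi> h)) < \<infinity>)"
proof
  assume "reidemeister_number W \<phi> < \<infinity>"
  then obtain F where F: "cov W \<phi> F" using RW by blast
  then have cZ: "cov (zgrp k) phib (snd ` F)" by (rule A_cov)
  then have RZf: "reidemeister_number (zgrp k) phib < \<infinity>" using RZ by blast
  then have f0: "\<forall>z\<in>zvec k. phib z = z \<longrightarrow> z = 0" using fix0 RZ_fin by blast
  have "\<forall>m \<in> zvec k. reidemeister_number S (\<lambda>h. tau G k m (\<phi> h)) < \<infinity>"
    using B_cov[OF F f0] RS by blast
  then show "reidemeister_number (zgrp k) phib < \<infinity> \<and>
     (\<forall>m \<in> zvec k. reidemeister_number S (\<lambda>h. tau G k m (\<phi> h)) < \<infinity>)" using RZf by blast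
next
  assume a: "reidemeister_number (zgrp k) phib < \<infinity> \<and>
     (\<forall>m \<in> zvec k. reidemeister_number S (\<lambda>h. tau G k m (\<phi> h)) < \<infinity>)"
  then obtain FZ where FZ: "cov (zgrp k) phib FZ" using RZ by blast
  then have M: "finite FZ" "FZ \<subseteq> zvec k" "zvec k \<subseteq> twisted_conj (zgrp k) phib `` FZ"
    by (auto simp: cov_def)
  have "\<forall>m\<in>FZ. \<exists>F. cov S (\<lambda>h. tau G k m (\<phi> h)) F" using a M RS by blast
  then have "\<exists>F. cov W \<phi> F" using C_cov[OF M] by blast
  then show "reidemeister_number W \<phi> < \<infinity>" using RW by blast
qed

lemma main2:
  assumes Msub: "M \<subseteq> zvec k"
    and rep: "\<forall>C \<in> reidemeister_classes (zgrp k) phib. \<exists>!m. m \<in> M \<and> m \<in> C"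
    and RZf: "reidemeister_number (zgrp k) phib < \<infinity>"
    and RSf: "\<forall>m \<in> M. reidemeister_number S (\<lambda>h. tau G k m (\<phi> h)) < \<infinity>"
  shows "reidemeister_number W \<phi> < \<infinity>"
proof -
  let ?r = "twisted_conj (zgrp k) phib"
  have eq: "equiv (zvec k) ?r" using group.tc_equiv[OF zgrp_group phib_hom] by simp
  have finC: "finite (reidemeister_classes (zgrp k) phib)" using RZf RZ_fin by blast
  have cls: "?r `` {m} \<in> reidemeister_classes (zgrp k) phib" if "m \<in> zvec k" for m
    using that by (simp add: reidemeister_classes_def quotientI)
  have inj: "inj_on (\<lambda>m. ?r `` {m}) M"
  proof (rule inj_onI)
    fix a b assume ab: "a \<in> M" "b \<in> M" "?r `` {a} = ?r `` {b}"
    have "a \<in> ?r `` {a}" using ab Msub eq by (meson equiv_class_self subsetD)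
    moreover have "b \<in> ?r `` {b}" using ab Msub eq by (meson equiv_class_self subsetD)
    ultimately have "a \<in> ?r `` {a}" "b \<in> ?r `` {a}" using ab by auto
    then show "a = b" using rep cls[of a] ab Msub by auto
  qed
  have "(\<lambda>m. ?r `` {m}) ` M \<subseteq> reidemeister_classes (zgrp k) phib" using cls Msub by auto
  then have finM: "finite M" using inj finC by (meson finite_imageD finite_subset)
  have cover: "zvec k \<subseteq> ?r `` M"
  proof
    fix n assume n: "n \<in> zvec k"
    then obtain m where m: "m \<in> M" "m \<in> ?r `` {n}" using rep cls by blast
    then have "(m, n) \<in> ?r" using eq by (meson Image_singleton_iff equivE symD)
    then show "n \<in> ?r `` M" using m by blast
  qed
  have "\<forall>m\<in>M. \<exists>F. cov S (\<lambda>h. tau G k m (\<phi> h)) F" using RSf RS Msub by blast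
  then have "\<exists>F. cov W \<phi> F" using C_cov[OF finM Msub cover] by blast
  then show ?thesis using RW by blast
qed

end

theorem mainTheorem2:
  fixes G :: "('a, 'b) monoid_scheme" and k :: nat
    and \<phi> :: "((nat \<Rightarrow> int) \<Rightarrow> 'a) \<times> (nat \<Rightarrow> int) \<Rightarrow> ((nat \<Rightarrow> int) \<Rightarrow> 'a) \<times> (nat \<Rightarrow> int)"
  assumes "comm_group G" and "finite (carrier G)" and "k \<ge> 1"
    and "\<phi> \<in> iso (wreath G k) (wreath G k)"
  shows "(reidemeister_number (wreath G k) \<phi> < \<infinity> \<longleftrightarrow>
            reidemeister_number (zgrp k) (induced_bar G \<phi>) < \<infinity> \<and>
            (\<forall>m \<in> zvec k. reidemeister_number (sigma_grp G k) (\<lambda>h. tau G k m (\<phi> h)) < \<infinity>))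
       \<and> (\<forall>M. M \<subseteq> zvec k \<longrightarrow>
            (\<forall>C \<in> reidemeister_classes (zgrp k) (induced_bar G \<phi>). \<exists>!m. m \<in> M \<and> m \<in> C) \<longrightarrow>
            reidemeister_number (zgrp k) (induced_bar G \<phi>) < \<infinity> \<longrightarrow>
            (\<forall>m \<in> M. reidemeister_number (sigma_grp G k) (\<lambda>h. tau G k m (\<phi> h)) < \<infinity>) \<longrightarrow>
            reidemeister_number (wreath G k) \<phi> < \<infinity>)"
proof -
  interpret wrp G k \<phi>
    using assms by (simp add: wrp_def wrp_axioms_def wr_def comm_group.axioms(2))
  show ?thesis using main1 main2 by blast
qed


end
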